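(* Let $K$ be a Noetherian $\Sigma$-pseudofield such that $C:=K^\sigma$ is a $\Sigma_1$-closed pseudofield, let $A\in\mathrm{GL}_n(K)$, let $L$ be a Picard–Vessiot pseudofield for $\sigma Y=AY$ over $K$ with fundamental matrix $F$, and let $G=\mathrm{Aut}_\Sigma(L/K)\subseteq\mathrm{GL}_n(C)$ be its Galois group. If $H$ is a closed subgroup of $G$ with $L^H=K$, then $H=G$.
   Context: All rings are commutative with $1$. Fix $\Sigma_0=\mathbb Z$ with generator $\sigma$, a finite abelian group $\Sigma_1=\mathbb Z/t_1\mathbb Z\oplus\dots\oplus\mathbb Z/t_s\mathbb Z$ ($t_i\ge2$), and $\Sigma=\Sigma_0\oplus\Sigma_1$. For a subgroup $\Sigma'\subseteq\Sigma$, a $\Sigma'$-ring is a ring with an action of $\Sigma'$ by ring automorphisms; $\Sigma'$-ideals are $\Sigma'$-stable ideals; $K^\sigma$ is the ring of $\sigma$-invariants. A $\Sigma'$-ring is $\Sigma'$-simple if its only $\Sigma'$-ideals are $0$ and itself ($\neq0$). A ring is absolutely flat if every module over it is flat. A $\Sigma'$-pseudofield is an absolutely flat $\Sigma'$-simple ring; Noetherian if it is a Noetherian ring. A $\Sigma_1$-pseudofield $C$ is $\Sigma_1$-closed if $\sqrt I=\mathbb I(\mathbb V(I))$ for every $m$ and every $\Sigma_1$-ideal $I$ of $C\{y_1,\dots,y_m\}_{\Sigma_1}$ (polynomial ring in indeterminates $\tau y_i$, $\tau\in\Sigma_1$), with $\mathbb V$ the common zero set and $\mathbb I$ the ideal of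 vanishing polynomials. A Picard–Vessiot pseudofield for $\sigma Y=AY$ is a Noetherian $\Sigma$-pseudofield $L$ containing $K$ as a $\Sigma$-subring such that there is $F\in\mathrm{GL}_n(L)$ with $\sigma(F)=AF$, $L^\sigma=K^\sigma$, and $L$ is generated over $K$ by the entries of $F$. $\mathrm{Aut}_\Sigma(L/K)$ is the group of $\Sigma$-automorphisms of $L$ fixing $K$ pointwise, embedded in $\mathrm{GL}_n(C)$ by $\gamma\mapsto F^{-1}\gamma(F)$. A subgroup $H\subseteq G$ is closed if it is the set of $M\in G$ at which all elements of some set $E\subseteq C\{x_{ij},1/\det X\}_{\Sigma_1}$ vanish (with $\tau x_{ij}$ evaluated as $\tau(M_{ij})$). *)

theory Defs
  imports "HOL-Library.Poly_Mapping" "Jordan_Normal_Form.Determinant"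
begin

section \<open>The group Sigma_1 = Z/t_1 + ... + Z/t_s (elements: exponent vectors)\<close>

definition Sig1 :: "nat list \<Rightarrow> nat list set" where
  "Sig1 t = {v. length v = length t \<and> (\<forall>i<length t. v ! i < t ! i)}"

definition sadd :: "nat list \<Rightarrow> nat list \<Rightarrow> nat list \<Rightarrow> nat list" where
  "sadd t v w = map (\<lambda>i. (v ! i + w ! i) mod (t ! i)) [0..<length t]"

definition szero :: "nat list \<Rightarrow> nat list" where
  "szero t = replicate (length t) 0"

section \<open>Rings with Sigma-action (the big ring L is the whole type)\<close>

definition ring_aut :: "('a::comm_ring_1 \<Rightarrow> 'a) \<Rightarrow> bool" where
  "ring_aut f \<longleftrightarrow> bij f \<and> f 1 = 1 \<and> (\<forall>a b. f (a + b) = f a + f b \<and> f (a * b) = f a * f b)"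

text \<open>sig is the generator sigma of Sigma_0 = Z, act tau the action of tau in Sigma_1;
  together an action of Sigma = Sigma_0 + Sigma_1 by ring automorphisms.\<close>
definition sigma_action :: "nat list \<Rightarrow> ('a::comm_ring_1 \<Rightarrow> 'a) \<Rightarrow> (nat list \<Rightarrow> 'a \<Rightarrow> 'a) \<Rightarrow> bool" where
  "sigma_action t sig act \<longleftrightarrow> ring_aut sig \<and>
     (\<forall>\<tau>\<in>Sig1 t. ring_aut (act \<tau>) \<and> act \<tau> \<circ> sig = sig \<circ> act \<tau>) \<and>
     act (szero t) = id \<and>
     (\<forall>\<tau>\<in>Sig1 t. \<forall>\<rho>\<in>Sig1 t. act (sadd t \<tau> \<rho>) = act \<tau> \<circ> act \<rho>)"

definition subring :: "'a::comm_ring_1 set \<Rightarrow> bool" where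
  "subring R \<longleftrightarrow> 0 \<in> R \<and> 1 \<in> R \<and> (\<forall>a\<in>R. \<forall>b\<in>R. a + b \<in> R \<and> a * b \<in> R \<and> - a \<in> R)"

definition ideal_in :: "'a::comm_ring_1 set \<Rightarrow> 'a set \<Rightarrow> bool" where
  "ideal_in R I \<longleftrightarrow> I \<subseteq> R \<and> 0 \<in> I \<and> (\<forall>a\<in>I. \<forall>b\<in>I. a + b \<in> I) \<and>
     (\<forall>r\<in>R. \<forall>a\<in>I. r * a \<in> I)"

definition sig1_stable :: "nat list \<Rightarrow> (nat list \<Rightarrow> 'a \<Rightarrow> 'a) \<Rightarrow> 'a set \<Rightarrow> bool" where
  "sig1_stable t act I \<longleftrightarrow> (\<forall>\<tau>\<in>Sig1 t. act \<tau> ` I \<subseteq> I)"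

definition sig_stable :: "nat list \<Rightarrow> ('a \<Rightarrow> 'a) \<Rightarrow> (nat list \<Rightarrow> 'a \<Rightarrow> 'a) \<Rightarrow> 'a set \<Rightarrow> bool" where
  "sig_stable t sig act I \<longleftrightarrow> sig ` I = I \<and> sig1_stable t act I"

text \<open>Absolutely flat = von Neumann regular.\<close>
definition abs_flat :: "'a::comm_ring_1 set \<Rightarrow> bool" where
  "abs_flat R \<longleftrightarrow> (\<forall>a\<in>R. \<exists>x\<in>R. a = a * a * x)"

definition noetherian :: "'a::comm_ring_1 set \<Rightarrow> bool" where
  "noetherian R \<longleftrightarrow> (\<forall>f :: nat \<Rightarrow> 'a set. (\<forall>k. ideal_in R (f k)) \<and> (\<forall>k. f k \<subseteq> f (Suc k))
      \<longrightarrow> (\<exists>N. \<forall>k\<ge>N. f k = f N))"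

definition sigma_pseudofield :: "nat list \<Rightarrow> ('a::comm_ring_1 \<Rightarrow> 'a) \<Rightarrow> (nat list \<Rightarrow> 'a \<Rightarrow> 'a) \<Rightarrow> 'a set \<Rightarrow> bool" where
  "sigma_pseudofield t sig act R \<longleftrightarrow> subring R \<and> sig_stable t sig act R \<and> abs_flat R \<and>
     R \<noteq> {0} \<and> (\<forall>I. ideal_in R I \<and> sig_stable t sig act I \<longrightarrow> I = {0} \<or> I = R)"

definition sigma1_pseudofield :: "nat list \<Rightarrow> (nat list \<Rightarrow> 'a \<Rightarrow> 'a) \<Rightarrow> 'a::comm_ring_1 set \<Rightarrow> bool" where
  "sigma1_pseudofield t act R \<longleftrightarrow> subring R \<and> sig1_stable t act R \<and> abs_flat R \<and>
     R \<noteq> {0} \<and> (\<forall>I. ideal_in R I \<and> sig1_stable t act I \<longrightarrow> I = {0} \<or> I = R)"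

definition const_ring :: "('a \<Rightarrow> 'a) \<Rightarrow> 'a set \<Rightarrow> 'a set" where
  "const_ring sig R = {a \<in> R. sig a = a}"

section \<open>Sigma_1-polynomial rings: variables are pairs (v, tau), standing for tau v\<close>

type_synonym ('v, 'a) spoly = "(('v \<times> nat list) \<Rightarrow>\<^sub>0 nat) \<Rightarrow>\<^sub>0 'a"

text \<open>C{v : v in V}_Sigma1: coefficients in C, variables tau v with v in V, tau in Sigma_1.\<close>
definition spoly_ring :: "nat list \<Rightarrow> 'a::comm_ring_1 set \<Rightarrow> 'v set \<Rightarrow> ('v, 'a) spoly set" where
  "spoly_ring t C V = {p. \<forall>m\<in>Poly_Mapping.keys p. Poly_Mapping.lookup p m \<in> C \<and> (\<forall>x\<in>Poly_Mapping.keys m. fst x \<in> V \<and> snd x \<in> Sig1 t)}"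

definition peval :: "('v, 'a::comm_ring_1) spoly \<Rightarrow> ('v \<times> nat list \<Rightarrow> 'a) \<Rightarrow> 'a" where
  "peval p val = (\<Sum>m\<in>Poly_Mapping.keys p. Poly_Mapping.lookup p m * (\<Prod>x\<in>Poly_Mapping.keys m. val x ^ Poly_Mapping.lookup m x))"

definition mshift :: "nat list \<Rightarrow> nat list \<Rightarrow> (('v \<times> nat list) \<Rightarrow>\<^sub>0 nat) \<Rightarrow> (('v \<times> nat list) \<Rightarrow>\<^sub>0 nat)" where
  "mshift t \<tau> m = (\<Sum>x\<in>Poly_Mapping.keys m. Poly_Mapping.single (fst x, sadd t \<tau> (snd x)) (Poly_Mapping.lookup m x))"

definition pact :: "nat list \<Rightarrow> (nat list \<Rightarrow> 'a \<Rightarrow> 'a) \<Rightarrow> nat list \<Rightarrow> ('v, 'a::comm_ring_1) spoly \<Rightarrow> ('v, 'a) spoly" where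
  "pact t act \<tau> p = (\<Sum>m\<in>Poly_Mapping.keys p. Poly_Mapping.single (mshift t \<tau> m) (act \<tau> (Poly_Mapping.lookup p m)))"

definition radical_in :: "'b::comm_ring_1 set \<Rightarrow> 'b set \<Rightarrow> 'b set" where
  "radical_in R I = {p \<in> R. \<exists>k. p ^ k \<in> I}"

text \<open>Points of C^m are functions c with c i in C for i < m (and c i = 0 otherwise).\<close>
definition zero_set :: "nat list \<Rightarrow> (nat list \<Rightarrow> 'a \<Rightarrow> 'a) \<Rightarrow> 'a::comm_ring_1 set \<Rightarrow> nat \<Rightarrow> (nat, 'a) spoly set \<Rightarrow> (nat \<Rightarrow> 'a) set" where
  "zero_set t act C m I = {c. (\<forall>i<m. c i \<in> C) \<and> (\<forall>i\<ge>m. c i = 0) \<and>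
      (\<forall>p\<in>I. peval p (\<lambda>(i, \<tau>). act \<tau> (c i)) = 0)}"

definition vanishing_ideal :: "nat list \<Rightarrow> (nat list \<Rightarrow> 'a \<Rightarrow> 'a) \<Rightarrow> 'a::comm_ring_1 set \<Rightarrow> nat \<Rightarrow> (nat \<Rightarrow> 'a) set \<Rightarrow> (nat, 'a) spoly set" where
  "vanishing_ideal t act C m S = {p \<in> spoly_ring t C {..<m}. \<forall>c\<in>S. peval p (\<lambda>(i, \<tau>). act \<tau> (c i)) = 0}"

definition sigma1_closed :: "nat list \<Rightarrow> (nat list \<Rightarrow> 'a \<Rightarrow> 'a) \<Rightarrow> 'a::comm_ring_1 set \<Rightarrow> bool" where
  "sigma1_closed t act C \<longleftrightarrow> sigma1_pseudofield t act C \<and>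
     (\<forall>m. \<forall>I. ideal_in (spoly_ring t C {..<m}) I \<and> (\<forall>\<tau>\<in>Sig1 t. pact t act \<tau> ` I \<subseteq> I) \<longrightarrow>
        radical_in (spoly_ring t C {..<m}) I = vanishing_ideal t act C m (zero_set t act C m I))"

definition GL_in :: "'a::comm_ring_1 set \<Rightarrow> nat \<Rightarrow> 'a mat \<Rightarrow> bool" where
  "GL_in R n M \<longleftrightarrow> M \<in> carrier_mat n n \<and> (\<forall>i<n. \<forall>j<n. M $$ (i, j) \<in> R) \<and> (\<exists>u\<in>R. det M * u = 1)"

definition pf_generated :: "nat list \<Rightarrow> ('a::comm_ring_1 \<Rightarrow> 'a) \<Rightarrow> (nat list \<Rightarrow> 'a \<Rightarrow> 'a) \<Rightarrow> 'a set \<Rightarrow> nat \<Rightarrow> 'a mat \<Rightarrow> bool" where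
  "pf_generated t sig act K n F \<longleftrightarrow> (\<forall>R. subring R \<and> K \<subseteq> R \<and> (\<forall>i<n. \<forall>j<n. F $$ (i, j) \<in> R) \<and>
      sig_stable t sig act R \<and> abs_flat R \<longrightarrow> R = UNIV)"

definition PV_pseudofield :: "nat list \<Rightarrow> ('a::comm_ring_1 \<Rightarrow> 'a) \<Rightarrow> (nat list \<Rightarrow> 'a \<Rightarrow> 'a) \<Rightarrow> 'a set \<Rightarrow> nat \<Rightarrow> 'a mat \<Rightarrow> 'a mat \<Rightarrow> bool" where
  "PV_pseudofield t sig act K n A F \<longleftrightarrow>
     sigma_pseudofield t sig act UNIV \<and> noetherian (UNIV :: 'a set) \<and>
     subring K \<and> sig_stable t sig act K \<and>
     GL_in UNIV n F \<and> map_mat sig F = A * F \<and>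
     const_ring sig UNIV = const_ring sig K \<and>
     pf_generated t sig act K n F"

definition aut_group :: "nat list \<Rightarrow> ('a::comm_ring_1 \<Rightarrow> 'a) \<Rightarrow> (nat list \<Rightarrow> 'a \<Rightarrow> 'a) \<Rightarrow> 'a set \<Rightarrow> ('a \<Rightarrow> 'a) set" where
  "aut_group t sig act K = {\<gamma>. ring_aut \<gamma> \<and> \<gamma> \<circ> sig = sig \<circ> \<gamma> \<and>
      (\<forall>\<tau>\<in>Sig1 t. \<gamma> \<circ> act \<tau> = act \<tau> \<circ> \<gamma>) \<and> (\<forall>a\<in>K. \<gamma> a = a)}"

text \<open>gamma is sent to F^{-1} gamma(F).\<close>
definition gal_emb :: "nat \<Rightarrow> 'a::comm_ring_1 mat \<Rightarrow> ('a \<Rightarrow> 'a) \<Rightarrow> 'a mat" where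
  "gal_emb n F \<gamma> = (THE M. M \<in> carrier_mat n n \<and> F * M = map_mat \<gamma> F)"

definition galois_group :: "nat list \<Rightarrow> ('a::comm_ring_1 \<Rightarrow> 'a) \<Rightarrow> (nat list \<Rightarrow> 'a \<Rightarrow> 'a) \<Rightarrow> 'a set \<Rightarrow> nat \<Rightarrow> 'a mat \<Rightarrow> 'a mat set" where
  "galois_group t sig act K n F = gal_emb n F ` aut_group t sig act K"

definition fixed_ring :: "nat list \<Rightarrow> ('a::comm_ring_1 \<Rightarrow> 'a) \<Rightarrow> (nat list \<Rightarrow> 'a \<Rightarrow> 'a) \<Rightarrow> 'a set \<Rightarrow> nat \<Rightarrow> 'a mat \<Rightarrow> 'a mat set \<Rightarrow> 'a set" where
  "fixed_ring t sig act K n F H = {a. \<forall>\<gamma>\<in>aut_group t sig act K. gal_emb n F \<gamma> \<in> H \<longrightarrow> \<gamma> a = a}"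

definition ring_inverse :: "'a::comm_ring_1 \<Rightarrow> 'a" where
  "ring_inverse a = (THE b. a * b = 1)"

text \<open>Elements of C{x_ij, 1/det X}_Sigma1 are represented as fractions (p, k) meaning
  p / D^k with D = prod over tau in Sigma_1 of tau(det X), p in C{x_ij}_Sigma1.\<close>
definition coord_ring :: "nat list \<Rightarrow> 'a::comm_ring_1 set \<Rightarrow> nat \<Rightarrow> ((nat \<times> nat, 'a) spoly \<times> nat) set" where
  "coord_ring t C n = spoly_ring t C ({..<n} \<times> {..<n}) \<times> UNIV"

definition coord_eval :: "nat list \<Rightarrow> (nat list \<Rightarrow> 'a \<Rightarrow> 'a) \<Rightarrow> (nat \<times> nat, 'a::comm_ring_1) spoly \<times> nat \<Rightarrow> 'a mat \<Rightarrow> 'a" where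
  "coord_eval t act e M = peval (fst e) (\<lambda>(ij, \<tau>). act \<tau> (M $$ ij)) *
      ring_inverse (\<Prod>\<tau>\<in>Sig1 t. act \<tau> (det M)) ^ snd e"

definition closed_subgroup :: "nat list \<Rightarrow> (nat list \<Rightarrow> 'a \<Rightarrow> 'a) \<Rightarrow> 'a::comm_ring_1 set \<Rightarrow> nat \<Rightarrow> 'a mat set \<Rightarrow> 'a mat set \<Rightarrow> bool" where
  "closed_subgroup t act C n H G \<longleftrightarrow> H \<subseteq> G \<and> 1\<^sub>m n \<in> H \<and>
     (\<forall>M\<in>H. \<forall>N\<in>H. M * N \<in> H) \<and> (\<forall>M\<in>H. \<exists>N\<in>H. M * N = 1\<^sub>m n) \<and>
     (\<exists>E \<subseteq> coord_ring t C n. H = {M \<in> G. \<forall>e\<in>E. coord_eval t act e M = 0})"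

end

theory Submission
  imports Defs
begin


section \<open>Ring automorphisms\<close>

lemma ra_add: "ring_aut f \<Longrightarrow> f (a + b) = f a + f b" by (simp add: ring_aut_def)
lemma ra_mult: "ring_aut f \<Longrightarrow> f (a * b) = f a * f b" by (simp add: ring_aut_def)
lemma ra_one: "ring_aut f \<Longrightarrow> f 1 = 1" by (simp add: ring_aut_def)
lemma ra_zero: "ring_aut f \<Longrightarrow> f 0 = 0"
proof -
  assume r: "ring_aut f"
  have "f (0 + 0) = f 0 + f 0" using ra_add[OF r] .
  thus ?thesis by simp
qed
lemma ra_uminus: "ring_aut f \<Longrightarrow> f (- a) = - f a"
proof -
  assume r: "ring_aut f"
  have "f (a + - a) = f a + f (- a)" using ra_add[OF r] .
  hence "0 = f a + f (- a)" using ra_zero[OF r] by simp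
  thus ?thesis by (simp add: eq_neg_iff_add_eq_0 add.commute)
qed
lemma ra_minus: "ring_aut f \<Longrightarrow> f (a - b) = f a - f b"
  using ra_add[of f a "- b"] ra_uminus[of f b] by simp
lemma ra_sum: "ring_aut f \<Longrightarrow> f (sum g S) = (\<Sum>x\<in>S. f (g x))"
  by (induction S rule: infinite_finite_induct) (auto simp: ra_zero ra_add)
lemma ra_prod: "ring_aut f \<Longrightarrow> f (prod g S) = (\<Prod>x\<in>S. f (g x))"
  by (induction S rule: infinite_finite_induct) (auto simp: ra_one ra_mult)
lemma ra_power: "ring_aut f \<Longrightarrow> f (a ^ k) = f a ^ k"
  by (induction k) (auto simp: ra_one ra_mult)
lemma ra_inv_app: "ring_aut f \<Longrightarrow> f (inv_into UNIV f y) = y"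
  unfolding ring_aut_def by (meson bij_inv_eq_iff)
lemma ra_app_inv: "ring_aut f \<Longrightarrow> inv_into UNIV f (f y) = y"
  unfolding ring_aut_def by (simp add: bij_is_inj)
lemma ra_inv: "ring_aut f \<Longrightarrow> ring_aut (inv_into UNIV f)"
proof -
  assume r: "ring_aut f"
  have b: "bij (inv_into UNIV f)" using r unfolding ring_aut_def by (simp add: bij_imp_bij_inv)
  have 1: "inv_into UNIV f 1 = 1" using ra_app_inv[OF r, of 1] ra_one[OF r] by simp
  have "inv_into UNIV f (a + b) = inv_into UNIV f a + inv_into UNIV f b" for a b
    using ra_app_inv[OF r, of "inv_into UNIV f a + inv_into UNIV f b"] ra_add[OF r, of "inv_into UNIV f a" "inv_into UNIV f b"] ra_inv_app[OF r] by simp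
  moreover have "inv_into UNIV f (a * b) = inv_into UNIV f a * inv_into UNIV f b" for a b
    using ra_app_inv[OF r, of "inv_into UNIV f a * inv_into UNIV f b"] ra_mult[OF r, of "inv_into UNIV f a" "inv_into UNIV f b"] ra_inv_app[OF r] by simp
  ultimately show ?thesis using b 1 unfolding ring_aut_def by blast
qed
lemma ra_comp: "ring_aut f \<Longrightarrow> ring_aut g \<Longrightarrow> ring_aut (f \<circ> g)"
  unfolding ring_aut_def using bij_comp by auto
lemma ra_id: "ring_aut id" unfolding ring_aut_def by auto

section \<open>Idempotent generators\<close>

lemma idem_gen:
  fixes J :: "'a::comm_ring_1 set"
  assumes af: "abs_flat (UNIV::'a set)" and noe: "noetherian (UNIV::'a set)"
    and J: "ideal_in UNIV J"
  shows "\<exists>e\<in>J. e * e = e \<and> (\<forall>j\<in>J. j * e = j)"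
proof (rule ccontr)
  assume nx: "\<not> ?thesis"
  define jj where "jj g = (SOME j. j \<in> J \<and> j * g \<noteq> j)" for g :: 'a
  define jp where "jp g = jj g - jj g * g" for g
  define xx where "xx g = (SOME x. jp g = jp g * jp g * x)" for g
  define step where "step g = g + jp g * xx g" for g
  define f where "f k = (step ^^ k) 0" for k
  have Jsub: "a \<in> J \<Longrightarrow> b \<in> J \<Longrightarrow> a - b \<in> J" for a b
  proof -
    assume "a \<in> J" "b \<in> J"
    hence "(-1) * b \<in> J" using J unfolding ideal_in_def by blast
    thus ?thesis using \<open>a \<in> J\<close> J unfolding ideal_in_def by (metis diff_conv_add_uminus mult_minus1)
  qed
  have Jmul: "a \<in> J \<Longrightarrow> r * a \<in> J" for a r using J unfolding ideal_in_def by blast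
  have Jmul2: "a \<in> J \<Longrightarrow> a * r \<in> J" for a r using Jmul by (simp add: mult.commute)
  have Jadd: "a \<in> J \<Longrightarrow> b \<in> J \<Longrightarrow> a + b \<in> J" for a b using J unfolding ideal_in_def by blast
  have props: "jp g \<in> J \<and> jp g * g = 0 \<and> jp g \<noteq> 0 \<and> step g \<in> J \<and> step g * step g = step g
      \<and> step g * g = g \<and> jp g * step g = jp g" if g: "g \<in> J" "g * g = g" for g
  proof -
    have "\<exists>j. j \<in> J \<and> j * g \<noteq> j" using nx g by blast
    hence j: "jj g \<in> J" "jj g * g \<noteq> jj g" unfolding jj_def by (metis (mono_tags, lifting) someI_ex)+
    have jpJ: "jp g \<in> J" unfolding jp_def using j Jsub Jmul2 by blast
    have jpg: "jp g * g = 0"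
    proof -
      have "jp g * g = jj g * g - jj g * (g * g)" unfolding jp_def by (simp only: left_diff_distrib mult.assoc)
      thus ?thesis using g(2) by simp
    qed
    have jp0: "jp g \<noteq> 0" unfolding jp_def using j by simp
    have "\<exists>x. jp g = jp g * jp g * x" using af unfolding abs_flat_def by blast
    hence x: "jp g = jp g * jp g * xx g" unfolding xx_def by (metis (mono_tags, lifting) someI_ex)
    let ?h = "jp g * xx g"
    have hg: "?h * g = 0"
    proof -
      have "?h * g = (jp g * g) * xx g" by (simp only: mult.assoc mult.commute mult.left_commute)
      thus ?thesis using jpg by simp
    qed
    have gh: "g * ?h = 0" using hg by (simp only: mult.commute)
    have hh: "?h * ?h = ?h"
    proof -
      have "?h * ?h = (jp g * jp g * xx g) * xx g" by (simp only: mult.assoc mult.commute mult.left_commute)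
      thus ?thesis using x by simp
    qed
    have s: "step g = g + ?h" unfolding step_def by simp
    have sJ: "step g \<in> J" using s g Jadd Jmul2 jpJ by auto
    have e1: "(g + ?h) * (g + ?h) = g * g + g * ?h + ?h * g + ?h * ?h" by (simp only: ring_distribs add.assoc add.left_commute)
    have ss: "step g * step g = step g" unfolding s e1 using g(2) gh hg hh by simp
    have e2: "(g + ?h) * g = g * g + ?h * g" by (simp only: ring_distribs)
    have sg: "step g * g = g" unfolding s e2 using g(2) hg by simp
    have e3: "jp g * (g + ?h) = jp g * g + (jp g * jp g * xx g)" by (simp only: ring_distribs mult.assoc)
    have js: "jp g * step g = jp g" unfolding s e3 using jpg x[symmetric] by simp
    show ?thesis using jpJ jpg jp0 sJ ss sg js by blast
  qed
  have fS: "f (Suc k) = step (f k)" for k unfolding f_def by simp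
  have fJ: "f k \<in> J \<and> f k * f k = f k" for k
  proof (induction k)
    case 0
    have "f 0 = 0" unfolding f_def by simp
    thus ?case using J unfolding ideal_in_def by simp
  next
    case (Suc k)
    have "step (f k) \<in> J \<and> step (f k) * step (f k) = step (f k)" using props[of "f k"] Suc by blast
    thus ?case using fS[of k] by simp
  qed
  define I where "I k = range (\<lambda>y. f k * y)" for k
  have Iid: "ideal_in UNIV (I k)" for k
  proof -
    have "0 \<in> I k" unfolding I_def by (metis mult_zero_right rangeI)
    moreover have "a + b \<in> I k" if ab: "a \<in> I k" "b \<in> I k" for a b
    proof -
      obtain y z where "a = f k * y" "b = f k * z" using ab unfolding I_def by blast
      hence "a + b = f k * (y + z)" by (simp add: distrib_left)
      thus ?thesis unfolding I_def by blast
    qed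
    moreover have "r * a \<in> I k" if aa: "a \<in> I k" for a r
    proof -
      obtain y where "a = f k * y" using aa unfolding I_def by blast
      hence "r * a = f k * (r * y)" by (simp add: mult.left_commute)
      thus ?thesis unfolding I_def by blast
    qed
    ultimately show ?thesis unfolding ideal_in_def by blast
  qed
  have Imono: "I k \<subseteq> I (Suc k)" for k
  proof
    fix a assume "a \<in> I k"
    then obtain y where "a = f k * y" unfolding I_def by auto
    moreover have "f (Suc k) * f k = f k" using props[of "f k"] fJ[of k] unfolding fS[of k] by blast
    ultimately have "a = f (Suc k) * (f k * y)" by (metis mult.assoc)
    thus "a \<in> I (Suc k)" unfolding I_def by auto
  qed
  have "(\<forall>k. ideal_in UNIV (I k)) \<and> (\<forall>k. I k \<subseteq> I (Suc k))" using Iid Imono by blast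
  hence "\<exists>N. \<forall>k\<ge>N. I k = I N" using noe[unfolded noetherian_def, rule_format, of I] by simp
  then obtain N where N: "\<forall>k\<ge>N. I k = I N" by blast
  have "f (Suc N) \<in> I (Suc N)" unfolding I_def by (rule range_eqI[where x=1]) simp
  moreover have "I (Suc N) = I N" using N[rule_format, of "Suc N"] by linarith
  ultimately have "f (Suc N) \<in> I N" by simp
  then obtain y where y: "f (Suc N) = f N * y" unfolding I_def by auto
  let ?g = "f N"
  have p: "jp ?g * step ?g = jp ?g" "jp ?g * ?g = 0" "jp ?g \<noteq> 0" using props[of "f N"] fJ[of N] by blast+
  have sy: "step ?g = ?g * y" using y fS[of N] by simp
  have "jp ?g = jp ?g * (?g * y)" using p(1) unfolding sy by simp
  also have "\<dots> = (jp ?g * ?g) * y" by (simp only: mult.assoc)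
  also have "\<dots> = 0" using p(2) by simp
  finally show False using p(3) by simp
qed



lemma map_mat_mult:
  assumes r: "ring_aut f" and X: "X \<in> carrier_mat a b" and Y: "Y \<in> carrier_mat b c"
  shows "map_mat f (X * Y) = map_mat f X * map_mat f Y"
proof (rule eq_matI)
  fix i j assume "i < dim_row (map_mat f X * map_mat f Y)" "j < dim_col (map_mat f X * map_mat f Y)"
  hence ij: "i < a" "j < c" using X Y by auto
  show "map_mat f (X * Y) $$ (i, j) = (map_mat f X * map_mat f Y) $$ (i, j)"
    using ij X Y by (simp add: scalar_prod_def ra_sum[OF r] ra_mult[OF r])
qed (use X Y in auto)

lemma map_mat_comp: "map_mat (f \<circ> g) X = map_mat f (map_mat g X)"
  by (rule eq_matI) auto

lemma map_mat_id: "map_mat id X = X"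
  by (rule eq_matI) auto

lemma adj_inv:
  assumes M: "M \<in> carrier_mat n n" and u: "det M * u = 1"
  shows "(u \<cdot>\<^sub>m adj_mat M) * M = 1\<^sub>m n" "M * (u \<cdot>\<^sub>m adj_mat M) = 1\<^sub>m n"
    "u \<cdot>\<^sub>m adj_mat M \<in> carrier_mat n n"
proof -
  have a: "adj_mat M \<in> carrier_mat n n" using adj_mat(1)[OF M] .
  have "(u \<cdot>\<^sub>m adj_mat M) * M = u \<cdot>\<^sub>m (det M \<cdot>\<^sub>m 1\<^sub>m n)"
    using mult_smult_assoc_mat[OF a M] adj_mat(3)[OF M] by simp
  also have "\<dots> = 1\<^sub>m n" using u by (intro eq_matI) (auto simp: mult.assoc[symmetric] mult.commute)
  finally show "(u \<cdot>\<^sub>m adj_mat M) * M = 1\<^sub>m n" .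
  have "M * (u \<cdot>\<^sub>m adj_mat M) = u \<cdot>\<^sub>m (det M \<cdot>\<^sub>m 1\<^sub>m n)"
    using mult_smult_distrib[OF M a] adj_mat(2)[OF M] by simp
  also have "\<dots> = 1\<^sub>m n" using u by (intro eq_matI) (auto simp: mult.assoc[symmetric] mult.commute)
  finally show "M * (u \<cdot>\<^sub>m adj_mat M) = 1\<^sub>m n" .
  show "u \<cdot>\<^sub>m adj_mat M \<in> carrier_mat n n" using a by simp
qed

lemma gal_emb_eq:
  assumes F: "F \<in> carrier_mat n n" and Fi: "Fi \<in> carrier_mat n n" "Fi * F = 1\<^sub>m n" "F * Fi = 1\<^sub>m n"
  shows "gal_emb n F g = Fi * map_mat g F"
  unfolding gal_emb_def
proof (rule the_equality)
  have mc: "map_mat g F \<in> carrier_mat n n" using map_carrier_mat[THEN iffD2, OF F] .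
  have c: "Fi * map_mat g F \<in> carrier_mat n n" using mult_carrier_mat[OF Fi(1) mc] .
  have "F * (Fi * map_mat g F) = (F * Fi) * map_mat g F" using assoc_mult_mat[OF F Fi(1) mc] by simp
  also have "\<dots> = map_mat g F" using Fi F by simp
  finally show "Fi * map_mat g F \<in> carrier_mat n n \<and> F * (Fi * map_mat g F) = map_mat g F" using c by simp
next
  fix M assume M: "M \<in> carrier_mat n n \<and> F * M = map_mat g F"
  have Mc: "M \<in> carrier_mat n n" using M by blast
  have "M = (Fi * F) * M" using Fi(2) Mc by simp
  also have "\<dots> = Fi * (F * M)" using assoc_mult_mat[OF Fi(1) F Mc] .
  also have "\<dots> = Fi * map_mat g F" using M by simp
  finally show "M = Fi * map_mat g F" .
qed



locale pvset =
  fixes t :: "nat list" and sig :: "'a::comm_ring_1 \<Rightarrow> 'a" and act :: "nat list \<Rightarrow> 'a \<Rightarrow> 'a"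
    and K :: "'a set" and n :: nat and A F :: "'a mat" and H :: "'a mat set"
  assumes sa: "sigma_action t sig act"
    and GLA: "GL_in K n A"
    and PV: "PV_pseudofield t sig act K n A F"
    and CS: "closed_subgroup t act (const_ring sig K) n H (galois_group t sig act K n F)"
    and FR: "fixed_ring t sig act K n F H = K"
begin

abbreviation "Aut \<equiv> aut_group t sig act K"
abbreviation "MM \<equiv> gal_emb n F"

lemma sig_aut: "ring_aut sig" using sa unfolding sigma_action_def by blast
lemma act_aut: "\<tau> \<in> Sig1 t \<Longrightarrow> ring_aut (act \<tau>)" using sa unfolding sigma_action_def by blast
lemma Fc: "F \<in> carrier_mat n n" using PV unfolding PV_pseudofield_def GL_in_def by blast
lemma F_unit: "\<exists>u. det F * u = 1" using PV unfolding PV_pseudofield_def GL_in_def by blast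
definition "uF = (SOME u. det F * u = 1)"
lemma uF: "det F * uF = 1" unfolding uF_def using F_unit by (rule someI_ex)
definition "Fi = uF \<cdot>\<^sub>m adj_mat F"
lemma Fi: "Fi \<in> carrier_mat n n" "Fi * F = 1\<^sub>m n" "F * Fi = 1\<^sub>m n"
  using adj_inv[OF Fc uF] unfolding Fi_def by auto
lemma Ac: "A \<in> carrier_mat n n" using GLA unfolding GL_in_def by blast
lemma AK: "i < n \<Longrightarrow> j < n \<Longrightarrow> A $$ (i, j) \<in> K" using GLA unfolding GL_in_def by blast
lemma A_unit: "\<exists>u. det A * u = 1" using GLA unfolding GL_in_def by blast
definition "uA = (SOME u. det A * u = 1)"
lemma uA: "det A * uA = 1" unfolding uA_def using A_unit by (rule someI_ex)
definition "Ai = uA \<cdot>\<^sub>m adj_mat A"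
lemma Ai: "Ai \<in> carrier_mat n n" "Ai * A = 1\<^sub>m n" "A * Ai = 1\<^sub>m n"
  using adj_inv[OF Ac uA] unfolding Ai_def by auto
lemma sigF: "map_mat sig F = A * F" using PV unfolding PV_pseudofield_def by blast
lemma constK: "sig a = a \<Longrightarrow> a \<in> K"
proof -
  assume "sig a = a"
  hence "a \<in> const_ring sig UNIV" unfolding const_ring_def by simp
  hence "a \<in> const_ring sig K" using PV unfolding PV_pseudofield_def by simp
  thus ?thesis unfolding const_ring_def by simp
qed

lemma M_eq: "MM g = Fi * map_mat g F" using gal_emb_eq[OF Fc Fi] .
lemma mapc: "X \<in> carrier_mat a b \<Longrightarrow> map_mat g X \<in> carrier_mat a b"
  using map_carrier_mat[THEN iffD2] .
lemma Mc: "MM g \<in> carrier_mat n n"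
  unfolding M_eq using mult_carrier_mat[OF Fi(1) mapc[OF Fc]] .
lemma FM: "F * MM g = map_mat g F"
proof -
  have "F * MM g = (F * Fi) * map_mat g F" unfolding M_eq using assoc_mult_mat[OF Fc Fi(1) mapc[OF Fc]] by simp
  also have "\<dots> = map_mat g F" unfolding Fi(3) using mapc[OF Fc] by simp
  finally show ?thesis .
qed

lemma aut_ra: "g \<in> Aut \<Longrightarrow> ring_aut g" unfolding aut_group_def by blast
lemma aut_sig: assumes "g \<in> Aut" shows "g (sig a) = sig (g a)"
proof -
  have "g \<circ> sig = sig \<circ> g" using assms unfolding aut_group_def by blast
  from fun_cong[OF this, of a] show ?thesis by simp
qed
lemma aut_act: assumes "g \<in> Aut" "\<tau> \<in> Sig1 t" shows "g (act \<tau> a) = act \<tau> (g a)"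
proof -
  have "g \<circ> act \<tau> = act \<tau> \<circ> g" using assms unfolding aut_group_def by blast
  from fun_cong[OF this, of a] show ?thesis by simp
qed
lemma aut_K: "g \<in> Aut \<Longrightarrow> a \<in> K \<Longrightarrow> g a = a" unfolding aut_group_def by blast

lemma mapK: assumes g: "g \<in> Aut" and X: "X \<in> carrier_mat n n" and XK: "\<And>i j. i < n \<Longrightarrow> j < n \<Longrightarrow> X $$ (i,j) \<in> K"
  shows "map_mat g X = X"
proof (rule eq_matI)
  fix i j assume "i < dim_row X" "j < dim_col X"
  hence "i < n" "j < n" using X by auto
  thus "map_mat g X $$ (i, j) = X $$ (i, j)" using X aut_K[OF g XK] by simp
qed auto

lemma cancelAF: assumes X: "X \<in> carrier_mat n n" and Y: "Y \<in> carrier_mat n n" and e: "A * (F * X) = A * (F * Y)"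
  shows "X = Y"
proof -
  have k: "Fi * (Ai * (A * (F * Z))) = Z" if Z: "Z \<in> carrier_mat n n" for Z
  proof -
    have FZ: "F * Z \<in> carrier_mat n n" using mult_carrier_mat[OF Fc Z] .
    have "Ai * (A * (F * Z)) = (Ai * A) * (F * Z)" using assoc_mult_mat[OF Ai(1) Ac FZ] by simp
    also have "\<dots> = F * Z" unfolding Ai(2) using left_mult_one_mat[OF FZ] .
    finally have 1: "Ai * (A * (F * Z)) = F * Z" .
    have "Fi * (F * Z) = (Fi * F) * Z" using assoc_mult_mat[OF Fi(1) Fc Z] by simp
    also have "\<dots> = Z" unfolding Fi(2) using left_mult_one_mat[OF Z] .
    finally show ?thesis unfolding 1 .
  qed
  have "X = Fi * (Ai * (A * (F * X)))" using k[OF X] by simp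
  also have "\<dots> = Fi * (Ai * (A * (F * Y)))" unfolding e ..
  also have "\<dots> = Y" using k[OF Y] .
  finally show ?thesis .
qed

lemma M_sig: assumes g: "g \<in> Aut" shows "map_mat sig (MM g) = MM g"
proof -
  have r: "ring_aut g" using aut_ra[OF g] .
  have "map_mat sig (F * MM g) = map_mat sig F * map_mat sig (MM g)"
    using map_mat_mult[OF sig_aut Fc Mc] .
  also have "\<dots> = A * (F * map_mat sig (MM g))" unfolding sigF using assoc_mult_mat[OF Ac Fc mapc[OF Mc]] .
  finally have l: "map_mat sig (F * MM g) = A * (F * map_mat sig (MM g))" .
  have "map_mat sig (map_mat g F) = map_mat g (map_mat sig F)"
    by (rule eq_matI) (auto simp: aut_sig[OF g])
  also have "\<dots> = map_mat g A * map_mat g F" unfolding sigF using map_mat_mult[OF r Ac Fc] .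
  also have "\<dots> = A * (F * MM g)" unfolding FM using mapK[OF g Ac AK] by simp
  finally have rr: "map_mat sig (F * MM g) = A * (F * MM g)" unfolding FM .
  show ?thesis using cancelAF[OF mapc[OF Mc] Mc] l rr by simp
qed

lemma M_K: assumes g: "g \<in> Aut" and ij: "i < n" "j < n" shows "MM g $$ (i,j) \<in> K"
proof -
  have d: "dim_row (MM g) = n" "dim_col (MM g) = n" using Mc[of g] by auto
  have "map_mat sig (MM g) $$ (i,j) = sig (MM g $$ (i,j))" using d ij by simp
  hence "sig (MM g $$ (i,j)) = MM g $$ (i,j)" using M_sig[OF g] by simp
  thus ?thesis by (rule constK)
qed

lemma M_comp: assumes g1: "g1 \<in> Aut" and g2: "g2 \<in> Aut" shows "MM (g1 \<circ> g2) = MM g1 * MM g2"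
proof -
  have "MM (g1 \<circ> g2) = Fi * map_mat g1 (map_mat g2 F)" unfolding M_eq map_mat_comp ..
  also have "\<dots> = Fi * map_mat g1 (F * MM g2)" using FM[of g2] by simp
  also have "\<dots> = Fi * (map_mat g1 F * map_mat g1 (MM g2))"
    using map_mat_mult[OF aut_ra[OF g1] Fc Mc, of g2] by simp
  also have "\<dots> = Fi * (map_mat g1 F * MM g2)" using mapK[OF g1 Mc M_K[OF g2]] by simp
  also have "\<dots> = (Fi * map_mat g1 F) * MM g2" using assoc_mult_mat[OF Fi(1) mapc[OF Fc] Mc[of g2]] by simp
  also have "\<dots> = MM g1 * MM g2" unfolding M_eq[of g1] ..
  finally show ?thesis .
qed

lemma aut_id: "id \<in> Aut" unfolding aut_group_def using ra_id by auto
lemma aut_comp: "g1 \<in> Aut \<Longrightarrow> g2 \<in> Aut \<Longrightarrow> g1 \<circ> g2 \<in> Aut"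
  unfolding aut_group_def using ra_comp by (auto simp: fun_eq_iff)
lemma aut_inv: assumes g: "g \<in> Aut" shows "inv_into UNIV g \<in> Aut"
proof -
  let ?h = "inv_into UNIV g"
  have r: "ring_aut g" using aut_ra[OF g] .
  have a: "?h (sig a) = sig (?h a)" for a
    using ra_app_inv[OF r, of "sig (?h a)"] aut_sig[OF g, of "?h a"] ra_inv_app[OF r, of a] by simp
  have b: "?h (act \<tau> a) = act \<tau> (?h a)" if "\<tau> \<in> Sig1 t" for a \<tau>
    using ra_app_inv[OF r, of "act \<tau> (?h a)"] aut_act[OF g that, of "?h a"] ra_inv_app[OF r, of a] by simp
  have c: "a \<in> K \<Longrightarrow> ?h a = a" for a using ra_app_inv[OF r, of a] aut_K[OF g] by metis
  show ?thesis unfolding aut_group_def using ra_inv[OF r] a b c by (auto simp: fun_eq_iff)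
qed

lemma M_id: "MM id = 1\<^sub>m n" unfolding M_eq map_mat_id using Fi(2) .

lemma M_inv: assumes g: "g \<in> Aut"
  shows "MM g * MM (inv_into UNIV g) = 1\<^sub>m n" "MM (inv_into UNIV g) * MM g = 1\<^sub>m n"
proof -
  have r: "ring_aut g" using aut_ra[OF g] .
  have 1: "g \<circ> inv_into UNIV g = id" using ra_inv_app[OF r] by (auto simp: fun_eq_iff)
  have 2: "inv_into UNIV g \<circ> g = id" using ra_app_inv[OF r] by (auto simp: fun_eq_iff)
  show "MM g * MM (inv_into UNIV g) = 1\<^sub>m n" using M_comp[OF g aut_inv[OF g]] 1 M_id by simp
  show "MM (inv_into UNIV g) * MM g = 1\<^sub>m n" using M_comp[OF aut_inv[OF g] g] 2 M_id by simp
qed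

definition "Gam = {g \<in> Aut. MM g \<in> H}"

lemma H_mult: "X \<in> H \<Longrightarrow> Y \<in> H \<Longrightarrow> X * Y \<in> H" using CS unfolding closed_subgroup_def by blast
lemma H_inv: "X \<in> H \<Longrightarrow> \<exists>Y\<in>H. X * Y = 1\<^sub>m n" using CS unfolding closed_subgroup_def by blast

lemma Gam_inv: assumes g: "g \<in> Gam" shows "inv_into UNIV g \<in> Gam"
proof -
  have ga: "g \<in> Aut" "MM g \<in> H" using g unfolding Gam_def by auto
  obtain Y where Y: "Y \<in> H" "MM g * Y = 1\<^sub>m n" using H_inv[OF ga(2)] by blast
  have "H \<subseteq> MM ` Aut" using CS unfolding closed_subgroup_def galois_group_def by blast
  then obtain g' where "Y = MM g'" using Y(1) by blast
  hence Yc: "Y \<in> carrier_mat n n" using Mc by simp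
  let ?N = "MM (inv_into UNIV g)"
  have "Y = (?N * MM g) * Y" unfolding M_inv(2)[OF ga(1)] using left_mult_one_mat[OF Yc] by simp
  also have "\<dots> = ?N * (MM g * Y)" using assoc_mult_mat[OF Mc Mc Yc] .
  also have "\<dots> = ?N" unfolding Y(2) using right_mult_one_mat[OF Mc] .
  finally show ?thesis using Y(1) aut_inv[OF ga(1)] unfolding Gam_def by simp
qed

lemma Gam_comp: "g1 \<in> Gam \<Longrightarrow> g2 \<in> Gam \<Longrightarrow> g1 \<circ> g2 \<in> Gam"
  unfolding Gam_def using M_comp aut_comp H_mult by auto

lemma Gam_aut: "g \<in> Gam \<Longrightarrow> g \<in> Aut" unfolding Gam_def by simp

lemma Gam_fix: "(\<forall>g\<in>Gam. g a = a) \<longleftrightarrow> a \<in> K"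
  using FR unfolding fixed_ring_def Gam_def by auto

end


definition gmod :: "('a::comm_ring_1 \<Rightarrow> 'a) set \<Rightarrow> nat \<Rightarrow> (nat \<Rightarrow> 'a) set \<Rightarrow> bool" where
  "gmod G N W \<longleftrightarrow> (\<forall>c\<in>W. \<forall>i\<ge>N. c i = 0) \<and> (\<lambda>_. 0) \<in> W \<and> (\<forall>c\<in>W. \<forall>d\<in>W. (\<lambda>i. c i + d i) \<in> W)
     \<and> (\<forall>a. \<forall>c\<in>W. (\<lambda>i. a * c i) \<in> W) \<and> (\<forall>g\<in>G. \<forall>c\<in>W. (\<lambda>i. g (c i)) \<in> W)"

lemma gmod_add: "gmod G N W \<Longrightarrow> c \<in> W \<Longrightarrow> d \<in> W \<Longrightarrow> (\<lambda>i. c i + d i) \<in> W"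
  unfolding gmod_def by blast
lemma gmod_sm: "gmod G N W \<Longrightarrow> c \<in> W \<Longrightarrow> (\<lambda>i. a * c i) \<in> W"
  unfolding gmod_def by blast
lemma gmod_0: "gmod G N W \<Longrightarrow> (\<lambda>_. 0) \<in> W"
  unfolding gmod_def by blast

lemma gmod_sub: assumes g: "gmod G N W" and c: "c \<in> W" and d: "d \<in> W" shows "(\<lambda>i. c i - a * d i) \<in> W"
proof -
  have "(\<lambda>i. (- a) * d i) \<in> W" using gmod_sm[OF g d] .
  from gmod_add[OF g c this] show ?thesis by simp
qed

lemma gmod_lin: fixes m :: nat and v :: "nat \<Rightarrow> nat \<Rightarrow> 'a::comm_ring_1" assumes g: "gmod G N W" shows "(\<forall>j<m. v j \<in> W) \<longrightarrow> (\<lambda>i. \<Sum>j<m. a j * v j i) \<in> W"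
proof (induction m)
  case 0 thus ?case using gmod_0[OF g] by simp
next
  case (Suc m)
  show ?case
  proof
    assume vv: "\<forall>j<Suc m. v j \<in> W"
    have 1: "(\<lambda>i. \<Sum>j<m. a j * v j i) \<in> W" using Suc vv by simp
    have 2: "(\<lambda>i. a m * v m i) \<in> W" using gmod_sm[OF g] vv by simp
    from gmod_add[OF g 1 2] show "(\<lambda>i. \<Sum>j<Suc m. a j * v j i) \<in> W" by simp
  qed
qed

lemma artin:
  fixes G :: "('a::comm_ring_1 \<Rightarrow> 'a) set"
  assumes af: "abs_flat (UNIV::'a set)" and noe: "noetherian (UNIV::'a set)"
    and Gr: "\<And>g. g \<in> G \<Longrightarrow> ring_aut g" and Ginv: "\<And>g. g \<in> G \<Longrightarrow> inv_into UNIV g \<in> G"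
    and fixK: "\<And>a. (\<forall>g\<in>G. g a = a) \<longleftrightarrow> a \<in> K"
  shows "gmod G N W \<Longrightarrow> \<exists>p. (\<forall>i j. p i j \<in> K) \<and> (\<forall>j. (\<lambda>i. p i j) \<in> W) \<and>
     (\<forall>c\<in>W. \<forall>i. (\<Sum>j<N. p i j * c j) = c i)"
proof (induction N arbitrary: W)
  case 0
  have K0: "0 \<in> K" using fixK Gr ra_zero by blast
  have "(\<lambda>_. 0) \<in> W" using 0 unfolding gmod_def by blast
  moreover have "c i = 0" if "c \<in> W" for c i using 0 that unfolding gmod_def by blast
  ultimately show ?case using K0 by (intro exI[of _ "\<lambda>i j. 0"]) auto
next
  case (Suc N)
  note gW = Suc.prems
  have Wz: "c \<in> W \<Longrightarrow> i \<ge> Suc N \<Longrightarrow> c i = 0" for c i using gW unfolding gmod_def by blast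
  have W0: "(\<lambda>_. 0) \<in> W" using gW unfolding gmod_def by blast
  have Wadd: "c \<in> W \<Longrightarrow> d \<in> W \<Longrightarrow> (\<lambda>i. c i + d i) \<in> W" for c d using gW unfolding gmod_def by blast
  have Wsm: "c \<in> W \<Longrightarrow> (\<lambda>i. a * c i) \<in> W" for c a using gW unfolding gmod_def by blast
  have Wg: "g \<in> G \<Longrightarrow> c \<in> W \<Longrightarrow> (\<lambda>i. g (c i)) \<in> W" for g c using gW unfolding gmod_def by blast
  define V where "V = {c \<in> W. c N = 0}"
  have gV: "gmod G N V"
  proof -
    have a: "\<forall>c\<in>V. \<forall>i\<ge>N. c i = 0"
    proof (intro ballI allI impI)
      fix c i assume c: "c \<in> V" and i: "N \<le> i"
      show "c i = 0"
      proof (cases "i = N")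
        case True thus ?thesis using c unfolding V_def by simp
      next
        case False thus ?thesis using c i Wz unfolding V_def by simp
      qed
    qed
    have b: "(\<lambda>_. 0) \<in> V" using W0 unfolding V_def by simp
    have c: "\<forall>c\<in>V. \<forall>d\<in>V. (\<lambda>i. c i + d i) \<in> V" using Wadd unfolding V_def by simp
    have d: "\<forall>a. \<forall>c\<in>V. (\<lambda>i. a * c i) \<in> V" using Wsm unfolding V_def by simp
    have e: "\<forall>g\<in>G. \<forall>c\<in>V. (\<lambda>i. g (c i)) \<in> V"
    proof (intro ballI)
      fix g c assume g: "g \<in> G" and c: "c \<in> V"
      have "(\<lambda>i. g (c i)) \<in> W" using Wg[OF g] c unfolding V_def by blast
      moreover have "g (c N) = 0" using c ra_zero[OF Gr[OF g]] unfolding V_def by simp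
      ultimately show "(\<lambda>i. g (c i)) \<in> V" unfolding V_def by simp
    qed
    show ?thesis unfolding gmod_def using a b c d e by blast
  qed
  obtain p0 where p0K: "\<And>i j. p0 i j \<in> K" and p0W: "\<And>j. (\<lambda>i. p0 i j) \<in> V"
    and p0fix: "\<And>c i. c \<in> V \<Longrightarrow> (\<Sum>j<N. p0 i j * c j) = c i"
    using Suc.IH[OF gV] by blast
  have VW: "V \<subseteq> W" unfolding V_def by blast
  define J where "J = (\<lambda>c. c N) ` W"
  have Jid: "ideal_in UNIV J"
    unfolding ideal_in_def J_def
  proof (intro conjI ballI)
    show "0 \<in> (\<lambda>c. c N) ` W" using W0 by force
    fix a b assume "a \<in> (\<lambda>c. c N) ` W" "b \<in> (\<lambda>c. c N) ` W"
    then obtain c d where "c \<in> W" "d \<in> W" "a = c N" "b = d N" by blast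
    thus "a + b \<in> (\<lambda>c. c N) ` W" using Wadd[of c d] by force
  next
    fix r a assume "a \<in> (\<lambda>c. c N) ` W"
    then obtain c where "c \<in> W" "a = c N" by blast
    thus "r * a \<in> (\<lambda>c. c N) ` W" using Wsm[of c r] by force
  qed simp
  obtain e where eJ: "e \<in> J" and ee: "e * e = e" and eg: "\<And>j. j \<in> J \<Longrightarrow> j * e = j"
    using idem_gen[OF af noe Jid] by blast
  have gJ: "g \<in> G \<Longrightarrow> j \<in> J \<Longrightarrow> g j \<in> J" for g j
  proof -
    assume g: "g \<in> G" and "j \<in> J"
    then obtain c where "c \<in> W" "j = c N" unfolding J_def by blast
    thus "g j \<in> J" using Wg[OF g] unfolding J_def by force
  qed
  have efix: "g e = e" if g: "g \<in> G" for g
  proof -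
    let ?h = "inv_into UNIV g"
    have r: "ring_aut g" using Gr[OF g] .
    have 1: "g e * e = g e" using eg gJ[OF g eJ] by blast
    have "?h e * e = ?h e" using eg gJ[OF Ginv[OF g] eJ] by blast
    hence "g (?h e * e) = g (?h e)" by simp
    hence 2: "e * g e = e" using ra_mult[OF r] ra_inv_app[OF r] by simp
    show ?thesis using 1 2 by (simp add: mult.commute)
  qed
  have eK: "e \<in> K" using fixK efix by blast
  obtain v where vW: "v \<in> W" and vN: "v N = e" using eJ unfolding J_def by blast
  define Pv where "Pv i = (\<Sum>j<N. p0 i j * v j)" for i
  have PvV: "Pv \<in> V"
  proof -
    have "(\<lambda>i. \<Sum>j<N. v j * p0 i j) \<in> V" using gmod_lin[OF gV, of N "\<lambda>j i. p0 i j" v] p0W by blast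
    thus ?thesis unfolding Pv_def by (simp add: mult.commute)
  qed
  define u where "u i = v i - 1 * Pv i" for i
  have uW: "u \<in> W" unfolding u_def using gmod_sub[OF gW vW] PvV VW by blast
  have uN: "u N = e" using PvV vN unfolding u_def V_def by simp
  have ufix: "g (u i) = u i" if g: "g \<in> G" for g i
  proof -
    have r: "ring_aut g" using Gr[OF g] .
    define d where "d i = g (v i) - 1 * v i" for i
    have dW: "d \<in> W" unfolding d_def using gmod_sub[OF gW Wg[OF g vW] vW, of 1] by simp
    have "d N = 0" unfolding d_def using vN efix[OF g] by simp
    hence dV: "d \<in> V" using dW unfolding V_def by simp
    have p0g: "g (p0 i j) = p0 i j" for i j using fixK p0K g by blast
    have gs: "g (\<Sum>j<N. p0 i j * v j) = (\<Sum>j<N. g (p0 i j * v j))" by (rule ra_sum[OF r])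
    have "g (u i) = g (v i) - (\<Sum>j<N. p0 i j * g (v j))"
      unfolding u_def Pv_def using ra_minus[OF r] gs ra_mult[OF r] p0g by simp
    also have "(\<Sum>j<N. p0 i j * g (v j)) = (\<Sum>j<N. p0 i j * d j) + (\<Sum>j<N. p0 i j * v j)"
      unfolding d_def by (simp add: sum.distrib[symmetric] algebra_simps)
    also have "\<dots> = d i + Pv i" using p0fix[OF dV] unfolding Pv_def by simp
    finally show ?thesis unfolding d_def u_def by simp
  qed
  have uK: "u i \<in> K" for i using fixK ufix by blast
  define p where "p i j = (if j < N then p0 i j else if j = N then u i else 0)" for i j
  have K0: "0 \<in> K" using fixK Gr ra_zero by blast
  have pK: "p i j \<in> K" for i j unfolding p_def using p0K uK K0 by simp
  have pW: "(\<lambda>i. p i j) \<in> W" for j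
  proof (cases "j < N")
    case True thus ?thesis unfolding p_def using p0W VW by auto
  next
    case False thus ?thesis unfolding p_def using uW W0 by (cases "j = N") auto
  qed
  have Pu0: "(\<Sum>j<N. p0 i j * u j) = 0" for i
  proof -
    have "(\<Sum>j<N. p0 i j * u j) = Pv i - (\<Sum>j<N. p0 i j * Pv j)"
      unfolding u_def Pv_def by (simp add: sum_subtractf right_diff_distrib)
    also have "(\<Sum>j<N. p0 i j * Pv j) = Pv i" using p0fix[OF PvV] .
    finally show ?thesis by simp
  qed
  have pfix: "(\<Sum>j<Suc N. p i j * c j) = c i" if c: "c \<in> W" for c i
  proof -
    define w where "w i = c i - c N * u i" for i
    have wW: "w \<in> W" unfolding w_def using gmod_sub[OF gW c uW] by simp
    have cNJ: "c N \<in> J" using c unfolding J_def by blast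
    have "w N = 0" unfolding w_def uN using eg[OF cNJ] by simp
    hence wV: "w \<in> V" using wW unfolding V_def by simp
    have "(\<Sum>j<N. p0 i j * w j) = (\<Sum>j<N. p0 i j * c j) - c N * (\<Sum>j<N. p0 i j * u j)"
      unfolding w_def by (simp add: sum_subtractf right_diff_distrib sum_distrib_left mult.left_commute)
    hence "(\<Sum>j<N. p0 i j * c j) = w i" using p0fix[OF wV] Pu0 by simp
    moreover have "(\<Sum>j<Suc N. p i j * c j) = (\<Sum>j<N. p0 i j * c j) + u i * c N"
      unfolding p_def by simp
    ultimately show ?thesis unfolding w_def by (simp add: mult.commute)
  qed
  show ?case using pK pW pfix by blast
qed



definition evL :: "('a::comm_ring_1 \<Rightarrow> 'a) \<Rightarrow> ('a \<times> 'a) list \<Rightarrow> 'a" where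
  "evL g xs = sum_list (map (\<lambda>(c, b). c * g b) xs)"

definition expr :: "('a::comm_ring_1 \<Rightarrow> 'a) set \<Rightarrow> (('a \<Rightarrow> 'a) \<Rightarrow> 'a) \<Rightarrow> bool" where
  "expr G f \<longleftrightarrow> (\<exists>xs. \<forall>g\<in>G. f g = evL g xs)"

definition mulL :: "('a::comm_ring_1 \<times> 'a) list \<Rightarrow> ('a \<times> 'a) list \<Rightarrow> ('a \<times> 'a) list" where
  "mulL xs ys = concat (map (\<lambda>(c1, b1). map (\<lambda>(c2, b2). (c1 * c2, b1 * b2)) ys) xs)"

lemma evL_append: "evL g (xs @ ys) = evL g xs + evL g ys" unfolding evL_def by simp

lemma evL_map: assumes r: "ring_aut g"
  shows "evL g (map (\<lambda>(c2, b2). (c * c2, b * b2)) ys) = (c * g b) * evL g ys"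
proof (induction ys)
  case Nil thus ?case unfolding evL_def by simp
next
  case (Cons y ys)
  obtain c2 b2 where y: "y = (c2, b2)" by force
  have "evL g (map (\<lambda>(c2, b2). (c * c2, b * b2)) (y # ys)) = c * c2 * (g b * g b2) + (c * g b) * evL g ys"
    using Cons unfolding y evL_def by (simp add: ra_mult[OF r])
  also have "\<dots> = (c * g b) * evL g (y # ys)" unfolding y evL_def by (simp add: algebra_simps)
  finally show ?case .
qed

lemma evL_mulL: assumes r: "ring_aut g" shows "evL g (mulL xs ys) = evL g xs * evL g ys"
proof (induction xs)
  case Nil thus ?case unfolding evL_def mulL_def by simp
next
  case (Cons x xs)
  obtain c b where x: "x = (c, b)" by force
  have "mulL (x # xs) ys = map (\<lambda>(c2, b2). (c * c2, b * b2)) ys @ mulL xs ys"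
    unfolding mulL_def x by simp
  hence "evL g (mulL (x # xs) ys) = evL g (map (\<lambda>(c2, b2). (c * c2, b * b2)) ys) + evL g (mulL xs ys)"
    using evL_append by simp
  also have "\<dots> = (c * g b) * evL g ys + evL g xs * evL g ys"
    unfolding evL_map[OF r, of c b ys] Cons ..
  also have "\<dots> = evL g (x # xs) * evL g ys" unfolding x evL_def by (simp add: algebra_simps)
  finally show ?case .
qed

lemma expr_cong: "(\<And>g. g \<in> G \<Longrightarrow> f g = f' g) \<Longrightarrow> expr G f' \<Longrightarrow> expr G f"
  unfolding expr_def by metis

lemma expr_const: assumes "\<And>g. g \<in> G \<Longrightarrow> ring_aut g" shows "expr G (\<lambda>g. a)"
  unfolding expr_def
  by (rule exI[of _ "[(a, 1)]"]) (auto simp: evL_def ra_one assms)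

lemma expr_app: "expr G (\<lambda>g. g b)"
  unfolding expr_def by (rule exI[of _ "[(1, b)]"]) (auto simp: evL_def)

lemma expr_add: "expr G f1 \<Longrightarrow> expr G f2 \<Longrightarrow> expr G (\<lambda>g. f1 g + f2 g)"
  unfolding expr_def using evL_append by metis

lemma expr_mult: assumes r: "\<And>g. g \<in> G \<Longrightarrow> ring_aut g"
  shows "expr G f1 \<Longrightarrow> expr G f2 \<Longrightarrow> expr G (\<lambda>g. f1 g * f2 g)"
  unfolding expr_def using evL_mulL r by metis

lemma expr_zero: "expr G (\<lambda>g. 0)"
  unfolding expr_def by (rule exI[of _ "[]"]) (auto simp: evL_def)

lemma expr_sum: assumes "finite S" "\<And>s. s \<in> S \<Longrightarrow> expr G (f s)"
  shows "expr G (\<lambda>g. \<Sum>s\<in>S. f s g)"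
  using assms
proof (induction S rule: finite_induct)
  case empty thus ?case using expr_zero by simp
next
  case (insert x F)
  have a: "expr G (f x)" using insert by simp
  have b: "expr G (\<lambda>g. \<Sum>s\<in>F. f s g)" using insert by simp
  have "expr G (\<lambda>g. f x g + (\<Sum>s\<in>F. f s g))"
    using expr_add[OF a b] .
  thus ?case using insert(1,2) by simp
qed

lemma expr_prod: assumes r: "\<And>g. g \<in> G \<Longrightarrow> ring_aut g" and "finite S" "\<And>s. s \<in> S \<Longrightarrow> expr G (f s)"
  shows "expr G (\<lambda>g. \<Prod>s\<in>S. f s g)"
  using assms(2,3)
proof (induction S rule: finite_induct)
  case empty thus ?case using expr_const[OF r] by simp
next
  case (insert x F)
  have a: "expr G (f x)" using insert by simp
  have b: "expr G (\<lambda>g. \<Prod>s\<in>F. f s g)" using insert by simp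
  have "expr G (\<lambda>g. f x g * (\<Prod>s\<in>F. f s g))"
    using expr_mult[OF r a b] .
  thus ?case using insert(1,2) by simp
qed

lemma expr_pow: assumes r: "\<And>g. g \<in> G \<Longrightarrow> ring_aut g" and e: "expr G f"
  shows "expr G (\<lambda>g. f g ^ k)"
proof (induction k)
  case 0 thus ?case using expr_const[OF r] by simp
next
  case (Suc k)
  thus ?case using expr_mult[OF r e Suc] by simp
qed



context pvset
begin

lemma MM_entry: assumes g: "g \<in> Aut" and ij: "i < n" "j < n" and tau: "\<tau> \<in> Sig1 t"
  shows "act \<tau> (MM g $$ (i, j)) = (\<Sum>l\<in>{0..<n}. act \<tau> (Fi $$ (i, l)) * g (act \<tau> (F $$ (l, j))))"
proof -
  have r: "ring_aut (act \<tau>)" using act_aut[OF tau] .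
  have dF: "dim_row Fi = n" "dim_col Fi = n" "dim_row F = n" "dim_col F = n" using Fi(1) Fc by auto
  have "MM g $$ (i, j) = (\<Sum>l\<in>{0..<n}. Fi $$ (i, l) * g (F $$ (l, j)))"
    unfolding M_eq using ij dF by (simp add: scalar_prod_def)
  hence "act \<tau> (MM g $$ (i, j)) = (\<Sum>l\<in>{0..<n}. act \<tau> (Fi $$ (i, l) * g (F $$ (l, j))))"
    using ra_sum[OF r] by simp
  also have "\<dots> = (\<Sum>l\<in>{0..<n}. act \<tau> (Fi $$ (i, l)) * g (act \<tau> (F $$ (l, j))))"
    using ra_mult[OF r] aut_act[OF g tau] by simp
  finally show ?thesis .
qed

lemma aut_ra': "\<And>g. g \<in> Aut \<Longrightarrow> ring_aut g" using aut_ra by blast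

lemma expr_val: assumes ij: "i < n" "j < n" and tau: "\<tau> \<in> Sig1 t"
  shows "expr Aut (\<lambda>g. act \<tau> (MM g $$ (i, j)))"
proof (rule expr_cong)
  show "act \<tau> (MM g $$ (i, j)) = (\<Sum>l\<in>{0..<n}. act \<tau> (Fi $$ (i, l)) * g (act \<tau> (F $$ (l, j))))"
    if "g \<in> Aut" for g using MM_entry[OF that ij tau] .
  show "expr Aut (\<lambda>g. \<Sum>l\<in>{0..<n}. act \<tau> (Fi $$ (i, l)) * g (act \<tau> (F $$ (l, j))))"
    by (rule expr_sum) (auto intro!: expr_mult[OF aut_ra'] expr_const[OF aut_ra'] expr_app)
qed

lemma expr_peval: assumes p: "p \<in> spoly_ring t C ({..<n} \<times> {..<n})"
  shows "expr Aut (\<lambda>g. peval p (\<lambda>(ij, \<tau>). act \<tau> (MM g $$ ij)))"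
  unfolding peval_def
proof (rule expr_sum)
  fix m assume m: "m \<in> Poly_Mapping.keys p"
  have vx: "expr Aut (\<lambda>g. act \<tau> (MM g $$ (i, j)))" if x: "((i, j), \<tau>) \<in> Poly_Mapping.keys m" for i j \<tau>
  proof -
    have "fst ((i, j), \<tau>) \<in> {..<n} \<times> {..<n} \<and> snd ((i, j), \<tau>) \<in> Sig1 t" using p m x unfolding spoly_ring_def by blast
    hence "i < n" "j < n" "\<tau> \<in> Sig1 t" by auto
    thus ?thesis using expr_val by simp
  qed
  show "expr Aut (\<lambda>g. Poly_Mapping.lookup p m * (\<Prod>x\<in>Poly_Mapping.keys m. (case x of (ij, \<tau>) \<Rightarrow> act \<tau> (MM g $$ ij)) ^ Poly_Mapping.lookup m x))"
    by (rule expr_mult[OF aut_ra' expr_const[OF aut_ra'] expr_prod[OF aut_ra']])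
       (auto intro!: expr_pow[OF aut_ra'] vx)
qed simp

lemma one_H: "1\<^sub>m n \<in> H" using CS unfolding closed_subgroup_def by blast
lemma id_Gam: "id \<in> Gam" unfolding Gam_def using aut_id M_id one_H by simp
lemma Gam_ra: "g \<in> Gam \<Longrightarrow> ring_aut g" using Gam_aut aut_ra by blast
lemma af: "abs_flat (UNIV::'a set)" using PV unfolding PV_pseudofield_def sigma_pseudofield_def by blast
lemma noe: "noetherian (UNIV::'a set)" using PV unfolding PV_pseudofield_def by blast

lemma vanish: assumes ef: "expr Aut f" and z: "\<And>h. h \<in> Gam \<Longrightarrow> f h = 0" and g: "g \<in> Aut"
  shows "f g = 0"
proof -
  obtain xs where xs: "\<And>g. g \<in> Aut \<Longrightarrow> f g = evL g xs" using ef unfolding expr_def by blast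
  define N where "N = length xs"
  define bs where "bs i = snd (xs ! i)" for i
  define cs where "cs i = (if i < N then fst (xs ! i) else 0)" for i
  have ev: "evL h xs = (\<Sum>i<N. cs i * h (bs i))" for h
  proof -
    have "evL h xs = (\<Sum>i\<in>{0..<N}. (map (\<lambda>(c, b). c * h b) xs) ! i)"
      unfolding evL_def N_def by (simp add: sum_list_sum_nth)
    also have "\<dots> = (\<Sum>i<N. cs i * h (bs i))" unfolding lessThan_atLeast0
      by (rule sum.cong) (auto simp: N_def cs_def bs_def case_prod_beta)
    finally show ?thesis .
  qed
  define W where "W = {c. (\<forall>i\<ge>N. c i = 0) \<and> (\<forall>h\<in>Gam. (\<Sum>i<N. c i * h (bs i)) = 0)}"
  have gW: "gmod Gam N W"
    unfolding gmod_def
  proof (intro conjI)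
    show "\<forall>c\<in>W. \<forall>i\<ge>N. c i = 0" unfolding W_def by blast
    show "(\<lambda>_. 0) \<in> W" unfolding W_def by simp
    show "\<forall>c\<in>W. \<forall>d\<in>W. (\<lambda>i. c i + d i) \<in> W" unfolding W_def
      by (simp add: distrib_right sum.distrib)
    show "\<forall>a. \<forall>c\<in>W. (\<lambda>i. a * c i) \<in> W" unfolding W_def
      by (simp add: mult.assoc sum_distrib_left[symmetric])
    show "\<forall>g\<in>Gam. \<forall>c\<in>W. (\<lambda>i. g (c i)) \<in> W"
    proof (intro ballI)
      fix g0 c assume g0: "g0 \<in> Gam" and c: "c \<in> W"
      have r: "ring_aut g0" using Gam_ra[OF g0] .
      have a: "\<forall>i\<ge>N. g0 (c i) = 0" using c ra_zero[OF r] unfolding W_def by simp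
      have b: "(\<Sum>i<N. g0 (c i) * h (bs i)) = 0" if h: "h \<in> Gam" for h
      proof -
        let ?k = "inv_into UNIV g0 \<circ> h"
        have k: "?k \<in> Gam" using Gam_comp[OF Gam_inv[OF g0] h] .
        have "(\<Sum>i<N. g0 (c i) * h (bs i)) = (\<Sum>i<N. g0 (c i * ?k (bs i)))"
          using ra_mult[OF r] ra_inv_app[OF r] by simp
        also have "\<dots> = g0 (\<Sum>i<N. c i * ?k (bs i))" by (rule ra_sum[OF r, symmetric])
        also have "\<dots> = 0"
        proof -
          have "(\<Sum>i<N. c i * ?k (bs i)) = 0" using c k unfolding W_def by blast
          thus ?thesis using ra_zero[OF r] by simp
        qed
        finally show ?thesis .
      qed
      show "(\<lambda>i. g0 (c i)) \<in> W" unfolding W_def using a b by simp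
    qed
  qed
  have csW: "cs \<in> W" unfolding W_def
  proof (intro CollectI conjI allI impI ballI)
    fix i assume "N \<le> i" thus "cs i = 0" unfolding cs_def by simp
  next
    fix h assume h: "h \<in> Gam"
    show "(\<Sum>i<N. cs i * h (bs i)) = 0" using ev[of h] xs[OF Gam_aut[OF h]] z[OF h] by simp
  qed
  obtain p where pK: "\<And>i j. p i j \<in> K" and pW: "\<And>j. (\<lambda>i. p i j) \<in> W"
    and pfix: "\<And>c i. c \<in> W \<Longrightarrow> (\<Sum>j<N. p i j * c j) = c i"
    using artin[OF af noe Gam_ra Gam_inv Gam_fix gW] by blast
  have col0: "(\<Sum>i<N. p i j * bs i) = 0" for j
  proof -
    have "(\<Sum>i<N. p i j * id (bs i)) = 0" using pW[of j] id_Gam unfolding W_def by blast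
    thus ?thesis by simp
  qed
  have r: "ring_aut g" using aut_ra[OF g] .
  have "f g = (\<Sum>i<N. cs i * g (bs i))" using xs[OF g] ev by simp
  also have "\<dots> = (\<Sum>i<N. (\<Sum>j<N. p i j * cs j) * g (bs i))" using pfix[OF csW] by simp
  also have "\<dots> = (\<Sum>i<N. \<Sum>j<N. cs j * (p i j * g (bs i)))"
    by (rule sum.cong) (simp_all add: sum_distrib_left sum_distrib_right mult_ac)
  also have "\<dots> = (\<Sum>j<N. cs j * (\<Sum>i<N. p i j * g (bs i)))"
    by (subst sum.swap) (simp add: sum_distrib_left)
  also have "\<dots> = (\<Sum>j<N. cs j * g (\<Sum>i<N. p i j * bs i))"
  proof (rule sum.cong)
    fix j
    have "g (\<Sum>i<N. p i j * bs i) = (\<Sum>i<N. g (p i j * bs i))" using ra_sum[OF r] .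
    also have "\<dots> = (\<Sum>i<N. p i j * g (bs i))" using ra_mult[OF r] aut_K[OF g pK] by simp
    finally show "cs j * (\<Sum>i<N. p i j * g (bs i)) = cs j * g (\<Sum>i<N. p i j * bs i)" by simp
  qed simp
  also have "\<dots> = 0" using col0 ra_zero[OF r] by simp
  finally show ?thesis .
qed

lemma ceval_zero: assumes g: "g \<in> Aut" and z: "coord_eval t act e (MM g) = 0"
  shows "peval (fst e) (\<lambda>(ij, \<tau>). act \<tau> (MM g $$ ij)) = 0"
proof -
  let ?h = "inv_into UNIV g"
  define U where "U = (\<Prod>\<tau>\<in>Sig1 t. act \<tau> (det (MM g)))"
  define V where "V = (\<Prod>\<tau>\<in>Sig1 t. act \<tau> (det (MM ?h)))"
  have d1: "det (MM g) * det (MM ?h) = 1"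
    using det_mult[OF Mc Mc, of g ?h] M_inv(1)[OF g] by simp
  have "U * V = (\<Prod>\<tau>\<in>Sig1 t. act \<tau> (det (MM g)) * act \<tau> (det (MM ?h)))"
    unfolding U_def V_def by (simp add: prod.distrib)
  also have "\<dots> = (\<Prod>\<tau>\<in>Sig1 t. act \<tau> 1)"
    by (rule prod.cong) (auto simp: ra_mult[OF act_aut, symmetric] d1)
  also have "\<dots> = 1" by (rule prod.neutral) (auto simp: ra_one[OF act_aut])
  finally have UV: "U * V = 1" .
  have ri: "ring_inverse U = V" unfolding ring_inverse_def
  proof (rule the_equality)
    show "U * V = 1" using UV .
    fix b assume b: "U * b = 1"
    have "b = (V * U) * b" using UV by (simp add: mult.commute)
    also have "\<dots> = V" using b by (simp add: mult.assoc)
    finally show "b = V" .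
  qed
  let ?X = "peval (fst e) (\<lambda>(ij, \<tau>). act \<tau> (MM g $$ ij))"
  have "?X * V ^ snd e = 0" using z unfolding coord_eval_def U_def[symmetric] ri .
  hence "?X * V ^ snd e * U ^ snd e = 0" by simp
  hence "?X * (U * V) ^ snd e = 0" by (simp add: power_mult_distrib mult.assoc mult.commute mult.left_commute)
  thus ?thesis using UV by simp
qed

lemma main: "H = galois_group t sig act K n F"
proof
  show "H \<subseteq> galois_group t sig act K n F" using CS unfolding closed_subgroup_def by blast
  obtain E where E: "E \<subseteq> coord_ring t (const_ring sig K) n"
    and HE: "H = {M \<in> galois_group t sig act K n F. \<forall>e\<in>E. coord_eval t act e M = 0}"
    using CS unfolding closed_subgroup_def by blast
  show "galois_group t sig act K n F \<subseteq> H"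
  proof
    fix X assume X: "X \<in> galois_group t sig act K n F"
    then obtain g where g: "g \<in> Aut" and Xg: "X = MM g" unfolding galois_group_def by blast
    have "coord_eval t act e X = 0" if e: "e \<in> E" for e
    proof -
      let ?f = "\<lambda>g. peval (fst e) (\<lambda>(ij, \<tau>). act \<tau> (MM g $$ ij))"
      have "fst e \<in> spoly_ring t (const_ring sig K) ({..<n} \<times> {..<n})"
        using E e unfolding coord_ring_def by auto
      hence ex: "expr Aut ?f" by (rule expr_peval)
      have "?f h = 0" if h: "h \<in> Gam" for h
      proof -
        have "MM h \<in> H" using h unfolding Gam_def by simp
        hence "coord_eval t act e (MM h) = 0" using HE e by blast
        thus ?thesis using ceval_zero Gam_aut[OF h] by blast
      qed
      hence "?f g = 0" using vanish[OF ex _ g] by blast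
      thus ?thesis unfolding Xg coord_eval_def by simp
    qed
    thus "X \<in> H" using HE X by blast
  qed
qed

end

theorem proposition18:
  fixes t :: "nat list" and sig :: "'a::comm_ring_1 \<Rightarrow> 'a" and act :: "nat list \<Rightarrow> 'a \<Rightarrow> 'a"
    and K :: "'a set" and n :: nat and A F :: "'a mat" and H :: "'a mat set"
  assumes "\<forall>i<length t. 2 \<le> t ! i"
    and "sigma_action t sig act"
    and "sigma_pseudofield t sig act K" and "noetherian K"
    and "sigma1_closed t act (const_ring sig K)"
    and "GL_in K n A"
    and "PV_pseudofield t sig act K n A F"
    and "closed_subgroup t act (const_ring sig K) n H (galois_group t sig act K n F)"
    and "fixed_ring t sig act K n F H = K"
  shows "H = galois_group t sig act K n F"
proof -
  interpret pvset t sig act K n A F H using assms by unfold_locales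
  show ?thesis using main .
qed


end
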